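(* Let $L$ be a finite set with $|L|=n$. Then: (a) the refinement relation $\preceq$ on $\tilde P_{\mathrm I}$ is a partial order; (b) $\{s(\mathbf A):\mathbf A\in P_{\mathrm{II}}\}$ equals the set $\tilde P_{\mathrm{II}}$ of nonempty down-sets of $(\tilde P_{\mathrm I},\preceq)$, and for all $\tilde{\mathbf A},\tilde{\mathbf B}\in\tilde P_{\mathrm{II}}$: there exist $\mathbf A,\mathbf B\in P_{\mathrm{II}}$ with $s(\mathbf A)=\tilde{\mathbf A}$, $s(\mathbf B)=\tilde{\mathbf B}$ and $\mathbf B\subseteq\mathbf A$ if and only if $\tilde{\mathbf B}\subseteq\tilde{\mathbf A}$; (c) $\{s(\mathfrak A):\mathfrak A\in P_{\mathrm{III}}\}$ equals the set of nonempty up-sets of $(\tilde P_{\mathrm{II}},\subseteq)$, and for all nonempty up-sets $\tilde{\mathfrak A},\tilde{\mathfrak B}$ of $(\tilde P_{\mathrm{II}},\subseteq)$: there exist $\mathfrak A,\mathfrak B\in P_{\mathrm{III}}$ with $s(\mathfrak A)=\tilde{\mathfrak A}$, $s(\mathfrak B)=\tilde{\mathfrak B}$ and $\mathfrak B\subseteq\mathfrak A$ if and only if $\tilde{\mathfrak B}\subseteq\tilde{\mathfrak A}$.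
   Context: A set partition of $L$ is a set $\xi$ of nonempty, pairwise disjoint subsets of $L$ whose union is $L$; $P_{\mathrm I}$ is the set of set partitions of $L$, with refinement $\upsilon\preceq\xi$ iff every $Y\in\upsilon$ is contained in some $X\in\xi$. An integer partition of $n$ is a finite multiset of positive integers summing to $n$; $\tilde P_{\mathrm I}$ is the set of integer partitions of $n$. The type map is $s(\xi)=$ the multiset $\{|X|:X\in\xi\}$. Refinement on $\tilde P_{\mathrm I}$: $\tilde\upsilon\preceq\tilde\xi$ iff there exist $\upsilon,\xi\in P_{\mathrm I}$ with $s(\upsilon)=\tilde\upsilon$, $s(\xi)=\tilde\xi$, $\upsilon\preceq\xi$. A down-set (resp. up-set) of a poset is a subset closed downward (resp. upward). $P_{\mathrm{II}}$ is the set of nonempty down-sets of $(P_{\mathrm I},\preceq)$, ordered by inclusion; $P_{\mathrm{III}}$ is the set of nonempty up-sets of $(P_{\mathrm{II}},\subseteq)$, ordered by inclusion. $s$ acts elementwise on these: for $\mathbf A\in P_{\mathrm{II}}$, $s(\mathbf A)=\{s(\xi):\xi\in\mathbf A\}$ (a set), and for $\mathfrak A\in P_{\mathrm{III}}$, $s(\mathfrak A)=\{s(\mathbf A):\mathbf A\in\mathfrak A\}$. *)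

theory Defs
  imports Main "HOL-Library.Multiset" "HOL-Library.Disjoint_Sets"
begin

definition set_partitions :: "'a set \<Rightarrow> 'a set set set" where
  "set_partitions L = {\<xi>. partition_on L \<xi>}"

definition refines :: "'a set set \<Rightarrow> 'a set set \<Rightarrow> bool" where
  "refines \<upsilon> \<xi> \<longleftrightarrow> (\<forall>Y\<in>\<upsilon>. \<exists>X\<in>\<xi>. Y \<subseteq> X)"

definition int_partitions :: "nat \<Rightarrow> nat multiset set" where
  "int_partitions n = {m. (\<forall>x\<in>#m. 0 < x) \<and> sum_mset m = n}"

definition ptype :: "'a set set \<Rightarrow> nat multiset" where
  "ptype \<xi> = image_mset card (mset_set \<xi>)"

definition int_refines :: "'a set \<Rightarrow> nat multiset \<Rightarrow> nat multiset \<Rightarrow> bool" where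
  "int_refines L u x \<longleftrightarrow> (\<exists>\<upsilon> \<xi>. \<upsilon> \<in> set_partitions L \<and> \<xi> \<in> set_partitions L
      \<and> ptype \<upsilon> = u \<and> ptype \<xi> = x \<and> refines \<upsilon> \<xi>)"

definition down_sets :: "'b set \<Rightarrow> ('b \<Rightarrow> 'b \<Rightarrow> bool) \<Rightarrow> 'b set set" where
  "down_sets A le = {D. D \<subseteq> A \<and> D \<noteq> {} \<and> (\<forall>x\<in>D. \<forall>y\<in>A. le y x \<longrightarrow> y \<in> D)}"

definition up_sets :: "'b set \<Rightarrow> ('b \<Rightarrow> 'b \<Rightarrow> bool) \<Rightarrow> 'b set set" where
  "up_sets A le = {U. U \<subseteq> A \<and> U \<noteq> {} \<and> (\<forall>x\<in>U. \<forall>y\<in>A. le x y \<longrightarrow> y \<in> U)}"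

definition P_II :: "'a set \<Rightarrow> 'a set set set set" where
  "P_II L = down_sets (set_partitions L) refines"

definition P_III :: "'a set \<Rightarrow> 'a set set set set set" where
  "P_III L = up_sets (P_II L) (\<subseteq>)"

definition tP_II :: "'a set \<Rightarrow> nat \<Rightarrow> nat multiset set set" where
  "tP_II L n = down_sets (int_partitions n) (int_refines L)"

definition tP_III :: "'a set \<Rightarrow> nat \<Rightarrow> nat multiset set set set" where
  "tP_III L n = up_sets (tP_II L n) (\<subseteq>)"

end

theory Submission
  imports Defs
begin

lemma part_fin:
  assumes "partition_on L P" "finite L"
  shows "finite P" "\<And>X. X \<in> P \<Longrightarrow> finite X" "\<And>X. X \<in> P \<Longrightarrow> X \<subseteq> L" "\<And>X. X \<in> P \<Longrightarrow> X \<noteq> {}"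
proof -
  show "finite P" using finite_elements assms by blast
  show "\<And>X. X \<in> P \<Longrightarrow> X \<subseteq> L" using partition_onD1[OF assms(1)] by blast
  then show "\<And>X. X \<in> P \<Longrightarrow> finite X" using assms(2) finite_subset by blast
  show "\<And>X. X \<in> P \<Longrightarrow> X \<noteq> {}" using partition_onD3[OF assms(1)] by blast
qed

lemma ptype_sum:
  assumes "partition_on L P" "finite L"
  shows "sum_mset (ptype P) = card L"
proof -
  have "card L = card (\<Union>P)" using partition_onD1[OF assms(1)] by simp
  also have "\<dots> = sum card P"
    by (rule card_Union_disjoint) (use partition_onD2[OF assms(1)] part_fin[OF assms] in auto)
  finally show ?thesis by (simp add: ptype_def sum_unfold_sum_mset)
qed

lemma ptype_pos:
  assumes "partition_on L P" "finite L"
  shows "\<forall>x\<in>#ptype P. 0 < x"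
  using part_fin[OF assms] by (auto simp: ptype_def card_gt_0_iff)

lemma ptype_int:
  assumes "partition_on L P" "finite L"
  shows "ptype P \<in> int_partitions (card L)"
  using ptype_sum[OF assms] ptype_pos[OF assms] by (simp add: int_partitions_def)

lemma ptype_Un:
  "finite A \<Longrightarrow> finite B \<Longrightarrow> A \<inter> B = {} \<Longrightarrow> ptype (A \<union> B) = ptype A + ptype B"
  by (simp add: ptype_def mset_set_Union)

lemma ptype_insert:
  "finite A \<Longrightarrow> X \<notin> A \<Longrightarrow> ptype (insert X A) = add_mset (card X) (ptype A)"
  by (simp add: ptype_def)

lemma part_Un:
  assumes "partition_on A P" "partition_on B Q" "A \<inter> B = {}"
  shows "partition_on (A \<union> B) (P \<union> Q)"
proof (rule partition_onI)
  show "\<Union>(P \<union> Q) = A \<union> B" using partition_onD1[OF assms(1)] partition_onD1[OF assms(2)] by auto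
  show "{} \<notin> P \<union> Q" using partition_onD3[OF assms(1)] partition_onD3[OF assms(2)] by auto
  fix p q assume pq: "p \<in> P \<union> Q" "q \<in> P \<union> Q" "p \<noteq> q"
  have dP: "disjnt p q" if "p \<in> P" "q \<in> P" using partition_onD2[OF assms(1)] that pq(3) by (auto simp: pairwise_def)
  have dQ: "disjnt p q" if "p \<in> Q" "q \<in> Q" using partition_onD2[OF assms(2)] that pq(3) by (auto simp: pairwise_def)
  have sP: "p \<subseteq> A" if "p \<in> P" for p using partition_onD1[OF assms(1)] that by auto
  have sQ: "p \<subseteq> B" if "p \<in> Q" for p using partition_onD1[OF assms(2)] that by auto
  show "disjnt p q" using pq dP dQ sP sQ assms(3) unfolding disjnt_def by blast
qed

lemma realize:
  "finite X \<Longrightarrow> (\<forall>x\<in>#m. 0 < x) \<Longrightarrow> sum_mset m = card X \<Longrightarrow> \<exists>P. partition_on X P \<and> ptype P = m"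
proof (induction m arbitrary: X)
  case empty
  then have "X = {}" by simp
  then show ?case by (intro exI[of _ "{}"]) (simp add: partition_on_empty ptype_def)
next
  case (add k m)
  then obtain S where S: "S \<subseteq> X" "card S = k"
    by (metis le_add1 obtain_subset_with_card_n sum_mset.add_mset)
  have "card (X - S) = sum_mset m" using add.prems S by (simp add: card_Diff_subset finite_subset)
  moreover have fin: "finite (X - S)" using add.prems by simp
  moreover have "\<forall>x\<in>#m. 0 < x" using add.prems by simp
  ultimately obtain P where P: "partition_on (X - S) P" "ptype P = m" using add.IH[of "X - S"] by auto
  have "S \<noteq> {}" using S add.prems by auto
  have "S \<notin> P" using part_fin[OF P(1) fin] \<open>S \<noteq> {}\<close> by blast
  have "partition_on X (insert S P)"
    using P(1) S \<open>S \<noteq> {}\<close> partition_on_insert[of S P X] partition_onD1[OF P(1)]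
    by (simp add: disjnt_def) blast
  moreover have "ptype (insert S P) = add_mset k m"
    using ptype_insert[OF part_fin(1)[OF P(1) fin] \<open>S \<notin> P\<close>] S P by simp
  ultimately show ?case by blast
qed

lemma restr_parts:
  assumes "partition_on L' u" "refines u x" "partition_on L' x" "X \<in> x"
  shows "partition_on X {Y\<in>u. Y \<subseteq> X}" "partition_on (L' - X) {Y\<in>u. \<not> Y \<subseteq> X}"
    "refines {Y\<in>u. \<not> Y \<subseteq> X} (x - {X})"
proof -
  have U: "\<Union>u = L'" "\<Union>x = L'" using assms(1,3) by (auto simp: partition_on_def)
  have E: "{} \<notin> u" using assms(1) by (auto simp: partition_on_def)
  have Du: "\<And>p q. p \<in> u \<Longrightarrow> q \<in> u \<Longrightarrow> p \<noteq> q \<Longrightarrow> p \<inter> q = {}"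
    using partition_onD2[OF assms(1)] by (auto simp: pairwise_def disjnt_def)
  have Dx: "\<And>p q. p \<in> x \<Longrightarrow> q \<in> x \<Longrightarrow> p \<noteq> q \<Longrightarrow> p \<inter> q = {}"
    using partition_onD2[OF assms(3)] by (auto simp: pairwise_def disjnt_def)
  have key: "\<And>Y Z. Y \<in> u \<Longrightarrow> Z \<in> x \<Longrightarrow> Y \<inter> Z \<noteq> {} \<Longrightarrow> Y \<subseteq> Z"
  proof -
    fix Y Z assume a: "Y \<in> u" "Z \<in> x" "Y \<inter> Z \<noteq> {}"
    then obtain Z' where Z': "Z' \<in> x" "Y \<subseteq> Z'" using assms(2) unfolding refines_def by blast
    have "Z \<inter> Z' \<noteq> {}" using a(3) Z'(2) by blast
    then have "Z = Z'" using Dx[OF a(2) Z'(1)] by blast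
    then show "Y \<subseteq> Z" using Z' by simp
  qed
  show "partition_on X {Y\<in>u. Y \<subseteq> X}"
  proof (rule partition_onI)
    show "\<Union>{Y\<in>u. Y \<subseteq> X} = X"
    proof
      show "\<Union>{Y\<in>u. Y \<subseteq> X} \<subseteq> X" by blast
      show "X \<subseteq> \<Union>{Y\<in>u. Y \<subseteq> X}"
      proof
        fix z assume z: "z \<in> X"
        then have "z \<in> L'" using U assms(4) by blast
        then obtain Y where "Y \<in> u" "z \<in> Y" using U by blast
        then have "Y \<subseteq> X" using key[of Y X] assms(4) z by blast
        then show "z \<in> \<Union>{Y\<in>u. Y \<subseteq> X}" using \<open>Y \<in> u\<close> \<open>z \<in> Y\<close> by blast
      qed
    qed
    show "{} \<notin> {Y\<in>u. Y \<subseteq> X}" using E by blast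
    fix p q assume "p \<in> {Y\<in>u. Y \<subseteq> X}" "q \<in> {Y\<in>u. Y \<subseteq> X}" "p \<noteq> q"
    then show "disjnt p q" using Du unfolding disjnt_def by blast
  qed
  show "partition_on (L' - X) {Y\<in>u. \<not> Y \<subseteq> X}"
  proof (rule partition_onI)
    show "\<Union>{Y\<in>u. \<not> Y \<subseteq> X} = L' - X"
    proof
      show "\<Union>{Y\<in>u. \<not> Y \<subseteq> X} \<subseteq> L' - X"
      proof
        fix z assume "z \<in> \<Union>{Y\<in>u. \<not> Y \<subseteq> X}"
        then obtain Y where Y: "Y \<in> u" "\<not> Y \<subseteq> X" "z \<in> Y" by blast
        have "Y \<inter> X = {}" using key[of Y X] Y assms(4) by blast
        then show "z \<in> L' - X" using Y U by blast
      qed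
      show "L' - X \<subseteq> \<Union>{Y\<in>u. \<not> Y \<subseteq> X}"
      proof
        fix z assume z: "z \<in> L' - X"
        then obtain Y where "Y \<in> u" "z \<in> Y" using U by blast
        then have "\<not> Y \<subseteq> X" using z by blast
        then show "z \<in> \<Union>{Y\<in>u. \<not> Y \<subseteq> X}" using \<open>Y \<in> u\<close> \<open>z \<in> Y\<close> by blast
      qed
    qed
    show "{} \<notin> {Y\<in>u. \<not> Y \<subseteq> X}" using E by blast
    fix p q assume "p \<in> {Y\<in>u. \<not> Y \<subseteq> X}" "q \<in> {Y\<in>u. \<not> Y \<subseteq> X}" "p \<noteq> q"
    then show "disjnt p q" using Du unfolding disjnt_def by blast
  qed
  show "refines {Y\<in>u. \<not> Y \<subseteq> X} (x - {X})"
    unfolding refines_def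
  proof
    fix Y assume "Y \<in> {Y\<in>u. \<not> Y \<subseteq> X}"
    then have Y: "Y \<in> u" "\<not> Y \<subseteq> X" by auto
    then obtain Z where "Z \<in> x" "Y \<subseteq> Z" using assms(2) unfolding refines_def by blast
    then show "\<exists>Z\<in>x - {X}. Y \<subseteq> Z" using Y by blast
  qed
qed

lemma transport:
  assumes "finite \<xi>" "finite L" "finite L'" "partition_on L \<xi>" "partition_on L' \<xi>'" "ptype \<xi> = ptype \<xi>'"
    "partition_on L' \<upsilon>'" "refines \<upsilon>' \<xi>'"
  shows "\<exists>\<upsilon>. partition_on L \<upsilon> \<and> refines \<upsilon> \<xi> \<and> ptype \<upsilon> = ptype \<upsilon>'"
  using assms(1-8)
proof (induction \<xi> arbitrary: L L' \<xi>' \<upsilon>' rule: finite_induct)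
  case empty
  then have "L = {}" by (simp add: partition_on_def)
  have "ptype \<xi>' = {#}" using empty by (simp add: ptype_def)
  then have "\<xi>' = {}" using part_fin(1)[OF empty(4,2)] by (simp add: ptype_def mset_set_empty_iff)
  then have "L' = {}" using empty(4) by (simp add: partition_on_def)
  then have "\<upsilon>' = {}" using empty(6) by (simp add: partition_on_empty)
  then show ?case using \<open>L = {}\<close> by (intro exI[of _ "{}"]) (simp add: partition_on_empty refines_def ptype_def)
next
  case (insert X \<xi>0)
  have finx': "finite \<xi>'" using part_fin(1)[OF insert.prems(4,2)] .
  have "card X \<in># ptype \<xi>'" using insert.prems(5) insert.hyps by (metis ptype_insert union_single_eq_member)
  then obtain X' where X': "X' \<in> \<xi>'" "card X' = card X" using finx' by (auto simp: ptype_def)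
  define \<xi>0' where "\<xi>0' = \<xi>' - {X'}"
  have ins': "\<xi>' = insert X' \<xi>0'" "X' \<notin> \<xi>0'" using X' by (auto simp: \<xi>0'_def)
  have "ptype \<xi>' = add_mset (card X') (ptype \<xi>0')"
    using ptype_insert[of \<xi>0' X'] ins' finx' by simp
  moreover have "ptype (insert X \<xi>0) = add_mset (card X) (ptype \<xi>0)"
    using ptype_insert insert.hyps by blast
  ultimately have eq0: "ptype \<xi>0 = ptype \<xi>0'" using insert.prems(5) X'(2) by simp
  have dj: "disjnt X (\<Union>\<xi>0)"
  proof -
    have "\<And>Z. Z \<in> \<xi>0 \<Longrightarrow> X \<inter> Z = {}"
      using partition_onD2[OF insert.prems(3)] insert.hyps(2) unfolding pairwise_def disjnt_def by auto
    then show ?thesis unfolding disjnt_def by blast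
  qed
  have p0: "partition_on (L - X) \<xi>0" "X \<subseteq> L" "X \<noteq> {}"
    using partition_on_insert[OF dj] insert.prems(3) by auto
  have dj': "disjnt X' (\<Union>\<xi>0')"
  proof -
    have "\<And>Z. Z \<in> \<xi>0' \<Longrightarrow> X' \<inter> Z = {}"
      using partition_onD2[OF insert.prems(4)] ins' unfolding pairwise_def disjnt_def by auto
    then show ?thesis unfolding disjnt_def by blast
  qed
  have p0': "partition_on (L' - X') \<xi>0'" using partition_on_insert[OF dj'] insert.prems(4) ins' by auto
  note R = restr_parts[OF insert.prems(6,7,4) X'(1)]
  have "refines {Y\<in>\<upsilon>'. \<not> Y \<subseteq> X'} \<xi>0'" using R(3) by (simp add: \<xi>0'_def)
  from insert.IH[OF _ _ p0(1) p0' eq0 R(2) this] insert.prems(1,2)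
  obtain \<upsilon>1 where u1: "partition_on (L - X) \<upsilon>1" "refines \<upsilon>1 \<xi>0" "ptype \<upsilon>1 = ptype {Y\<in>\<upsilon>'. \<not> Y \<subseteq> X'}"
    by auto
  have finX: "finite X" "finite X'" using insert.prems(1,2) p0(2) X'(1) part_fin[OF insert.prems(4,2)] by (auto intro: finite_subset)
  have "sum_mset (ptype {Y\<in>\<upsilon>'. Y \<subseteq> X'}) = card X"
    using ptype_sum[OF R(1) finX(2)] X'(2) by simp
  from realize[OF finX(1) ptype_pos[OF R(1) finX(2)] this]
  obtain \<pi> where pi: "partition_on X \<pi>" "ptype \<pi> = ptype {Y\<in>\<upsilon>'. Y \<subseteq> X'}" by blast
  have "partition_on (X \<union> (L - X)) (\<pi> \<union> \<upsilon>1)" by (rule part_Un[OF pi(1) u1(1)]) auto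
  moreover have "X \<union> (L - X) = L" using p0(2) by auto
  moreover have "refines (\<pi> \<union> \<upsilon>1) (insert X \<xi>0)"
    using u1(2) pi(1) unfolding refines_def partition_on_def by blast
  moreover have "ptype (\<pi> \<union> \<upsilon>1) = ptype \<upsilon>'"
  proof -
    have fpi: "finite \<pi>" using part_fin(1)[OF pi(1) finX(1)] .
    have fu1: "finite \<upsilon>1" using part_fin(1)[OF u1(1)] insert.prems(1) by simp
    have "\<pi> \<inter> \<upsilon>1 = {}"
    proof (rule ccontr)
      assume "\<pi> \<inter> \<upsilon>1 \<noteq> {}"
      then obtain Z where Z: "Z \<in> \<pi>" "Z \<in> \<upsilon>1" by blast
      have "Z \<subseteq> X" "Z \<subseteq> L - X" "Z \<noteq> {}"
        using Z partition_onD1[OF pi(1)] partition_onD1[OF u1(1)] partition_onD3[OF pi(1)] by auto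
      then show False by blast
    qed
    then have "ptype (\<pi> \<union> \<upsilon>1) = ptype \<pi> + ptype \<upsilon>1" using ptype_Un fpi fu1 by blast
    moreover have fu': "finite \<upsilon>'" using part_fin(1)[OF insert.prems(6,2)] .
    have "\<upsilon>' = {Y\<in>\<upsilon>'. Y \<subseteq> X'} \<union> {Y\<in>\<upsilon>'. \<not> Y \<subseteq> X'}" by auto
    then have "ptype \<upsilon>' = ptype {Y\<in>\<upsilon>'. Y \<subseteq> X'} + ptype {Y\<in>\<upsilon>'. \<not> Y \<subseteq> X'}"
      using ptype_Un[of "{Y\<in>\<upsilon>'. Y \<subseteq> X'}" "{Y\<in>\<upsilon>'. \<not> Y \<subseteq> X'}"] fu' by auto
    ultimately show ?thesis using pi(2) u1(3) by simp
  qed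
  ultimately show ?case by metis
qed

lemma refines_card:
  assumes "finite L" "partition_on L u" "partition_on L x" "refines u x"
  shows "card x \<le> card u" "card u = card x \<Longrightarrow> u = x"
proof -
  define g where "g Y = (SOME X. X \<in> x \<and> Y \<subseteq> X)" for Y
  have g: "\<And>Y. Y \<in> u \<Longrightarrow> g Y \<in> x \<and> Y \<subseteq> g Y"
    unfolding g_def using assms(4) unfolding refines_def by (metis (mono_tags, lifting) someI)
  have uniq: "\<And>Y X. Y \<in> u \<Longrightarrow> X \<in> x \<Longrightarrow> Y \<inter> X \<noteq> {} \<Longrightarrow> X = g Y"
  proof -
    fix Y X assume a: "Y \<in> u" "X \<in> x" "Y \<inter> X \<noteq> {}"
    then have "g Y \<inter> X \<noteq> {}" using g by blast
    then show "X = g Y" using assms(3) a g unfolding partition_on_def pairwise_def disjnt_def by blast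
  qed
  have surj: "g ` u = x"
  proof
    show "g ` u \<subseteq> x" using g by blast
    show "x \<subseteq> g ` u"
    proof
      fix X assume "X \<in> x"
      then have "X \<noteq> {}" using partition_onD3[OF assms(3)] by auto
      then obtain z where "z \<in> X" by blast
      then have "z \<in> L" using partition_onD1[OF assms(3)] \<open>X \<in> x\<close> by blast
      then obtain Y where "Y \<in> u" "z \<in> Y" using partition_onD1[OF assms(2)] by blast
      then show "X \<in> g ` u" using uniq \<open>X \<in> x\<close> \<open>z \<in> X\<close> by blast
    qed
  qed
  have fu: "finite u" using part_fin(1)[OF assms(2,1)] .
  show "card x \<le> card u" using surj card_image_le[OF fu, of g] by simp
  assume ceq: "card u = card x"
  have inj: "inj_on g u" using surj ceq fu by (simp add: eq_card_imp_inj_on)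
  have "x \<subseteq> u"
  proof
    fix X assume X: "X \<in> x"
    then obtain Y where Y: "Y \<in> u" "g Y = X" using surj by blast
    have "X \<subseteq> Y"
    proof
      fix z assume "z \<in> X"
      then have "z \<in> L" using partition_onD1[OF assms(3)] X by blast
      then obtain Y' where "Y' \<in> u" "z \<in> Y'" using partition_onD1[OF assms(2)] by blast
      then have "g Y' = X" using uniq X \<open>z \<in> X\<close> by blast
      then have "Y' = Y" using inj Y \<open>Y' \<in> u\<close> unfolding inj_on_def by metis
      then show "z \<in> Y" using \<open>z \<in> Y'\<close> by simp
    qed
    then have "X = Y" using g Y by blast
    then show "X \<in> u" using Y by simp
  qed
  then show "u = x" using ceq fu by (metis card_subset_eq)
qed

lemma surjS:
  assumes "finite L" "card L = n" "m \<in> int_partitions n"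
  shows "\<exists>\<xi>\<in>set_partitions L. ptype \<xi> = m"
  using realize[OF assms(1), of m] assms by (auto simp: int_partitions_def set_partitions_def)

lemma intoT:
  assumes "finite L" "card L = n" "\<xi> \<in> set_partitions L"
  shows "ptype \<xi> \<in> int_partitions n"
  using ptype_int[of L \<xi>] assms by (simp add: set_partitions_def)

lemma transportS:
  assumes "finite L" "\<xi> \<in> set_partitions L" "int_refines L u (ptype \<xi>)"
  shows "\<exists>\<upsilon>\<in>set_partitions L. refines \<upsilon> \<xi> \<and> ptype \<upsilon> = u"
proof -
  obtain v x where vx: "v \<in> set_partitions L" "x \<in> set_partitions L" "ptype v = u" "ptype x = ptype \<xi>" "refines v x"
    using assms(3) unfolding int_refines_def by blast
  have "finite \<xi>" using part_fin(1)[of L \<xi>] assms by (simp add: set_partitions_def)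
  from transport[OF this assms(1) assms(1), of x v] vx assms(2)
  show ?thesis by (auto simp: set_partitions_def)
qed

lemma po:
  assumes "finite L" "card L = n"
  shows "partial_order_on (int_partitions n) {(u, x). int_refines L u x}"
  unfolding partial_order_on_def preorder_on_def
proof (intro conjI)
  show "{(u, x). int_refines L u x} \<subseteq> int_partitions n \<times> int_partitions n"
    using intoT[OF assms] unfolding int_refines_def by blast
  show "refl_on (int_partitions n) {(u, x). int_refines L u x}"
  proof (rule refl_onI)
    fix m assume "m \<in> int_partitions n"
    then obtain \<xi> where "\<xi> \<in> set_partitions L" "ptype \<xi> = m" using surjS[OF assms] by blast
    then show "(m, m) \<in> {(u, x). int_refines L u x}"
      unfolding int_refines_def refines_def by blast
  qed
  show "trans {(u, x). int_refines L u x}"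
  proof (rule transI, clarsimp)
    fix u x y assume a: "int_refines L u x" "int_refines L x y"
    then obtain \<xi> \<eta> where b: "\<xi> \<in> set_partitions L" "\<eta> \<in> set_partitions L" "ptype \<xi> = x" "ptype \<eta> = y" "refines \<xi> \<eta>"
      unfolding int_refines_def by blast
    with transportS[OF assms(1) b(1)] a(1) obtain \<upsilon> where "\<upsilon> \<in> set_partitions L" "refines \<upsilon> \<xi>" "ptype \<upsilon> = u"
      by blast
    moreover have "refines \<upsilon> \<eta>" using \<open>refines \<upsilon> \<xi>\<close> b(5) unfolding refines_def by (meson order_trans)
    ultimately show "int_refines L u y" using b unfolding int_refines_def by blast
  qed
  show "antisym {(u, x). int_refines L u x}"
  proof (rule antisymI, clarsimp)
    fix u x assume a: "int_refines L u x" "int_refines L x u"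
    have sz: "\<And>a b. int_refines L a b \<Longrightarrow> size b \<le> size a"
    proof -
      fix a b assume "int_refines L a b"
      then obtain v w where "v \<in> set_partitions L" "w \<in> set_partitions L" "ptype v = a" "ptype w = b" "refines v w"
        unfolding int_refines_def by blast
      then show "size b \<le> size a"
        using refines_card(1)[OF assms(1), of v w] part_fin(1)[OF _ assms(1), of v] part_fin(1)[OF _ assms(1), of w]
        by (auto simp: set_partitions_def ptype_def)
    qed
    obtain v w where c: "v \<in> set_partitions L" "w \<in> set_partitions L" "ptype v = u" "ptype w = x" "refines v w"
      using a(1) unfolding int_refines_def by blast
    have "size u = size x" using sz a by (meson le_antisym)
    then have "card v = card w" using c part_fin(1)[OF _ assms(1), of v] part_fin(1)[OF _ assms(1), of w]
      by (auto simp: set_partitions_def ptype_def)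
    then have "v = w" using refines_card(2)[OF assms(1), of v w] c by (auto simp: set_partitions_def)
    then show "u = x" using c by simp
  qed
qed

definition pre1 :: "'a set \<Rightarrow> nat multiset set \<Rightarrow> 'a set set set" where
  "pre1 L tA = {\<xi>\<in>set_partitions L. ptype \<xi> \<in> tA}"

lemma img_II:
  assumes "finite L" "card L = n" "A \<in> P_II L"
  shows "ptype ` A \<in> tP_II L n"
proof -
  have A: "A \<subseteq> set_partitions L" "A \<noteq> {}" "\<And>x y. x \<in> A \<Longrightarrow> y \<in> set_partitions L \<Longrightarrow> refines y x \<Longrightarrow> y \<in> A"
    using assms(3) unfolding P_II_def down_sets_def by auto
  have "\<forall>x\<in>ptype ` A. \<forall>y\<in>int_partitions n. int_refines L y x \<longrightarrow> y \<in> ptype ` A"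
  proof clarify
    fix \<xi> y assume "\<xi> \<in> A" "y \<in> int_partitions n" "int_refines L y (ptype \<xi>)"
    then obtain \<upsilon> where "\<upsilon> \<in> set_partitions L" "refines \<upsilon> \<xi>" "ptype \<upsilon> = y"
      using transportS[OF assms(1)] A(1) by blast
    then show "y \<in> ptype ` A" using A(3) \<open>\<xi> \<in> A\<close> by blast
  qed
  then show ?thesis using A intoT[OF assms(1,2)] unfolding tP_II_def down_sets_def by blast
qed

lemma pre_II:
  assumes "finite L" "card L = n" "tA \<in> tP_II L n"
  shows "pre1 L tA \<in> P_II L" "ptype ` pre1 L tA = tA"
proof -
  have tA: "tA \<subseteq> int_partitions n" "tA \<noteq> {}" "\<And>x y. x \<in> tA \<Longrightarrow> y \<in> int_partitions n \<Longrightarrow> int_refines L y x \<Longrightarrow> y \<in> tA"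
    using assms(3) unfolding tP_II_def down_sets_def by auto
  show im: "ptype ` pre1 L tA = tA"
    using tA(1) surjS[OF assms(1,2)] unfolding pre1_def by blast
  have "\<forall>x\<in>pre1 L tA. \<forall>y\<in>set_partitions L. refines y x \<longrightarrow> y \<in> pre1 L tA"
  proof clarify
    fix x y assume "x \<in> pre1 L tA" "y \<in> set_partitions L" "refines y x"
    then have "int_refines L (ptype y) (ptype x)" unfolding int_refines_def pre1_def by blast
    then show "y \<in> pre1 L tA" using tA(3) \<open>x \<in> pre1 L tA\<close> \<open>y \<in> set_partitions L\<close> intoT[OF assms(1,2)]
      unfolding pre1_def by blast
  qed
  moreover have "pre1 L tA \<noteq> {}" using im tA(2) by auto
  ultimately show "pre1 L tA \<in> P_II L" unfolding P_II_def down_sets_def pre1_def by blast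
qed

lemma img_III:
  assumes "finite L" "card L = n" "AA \<in> P_III L"
  shows "(image ptype) ` AA \<in> tP_III L n"
proof -
  have AA: "AA \<subseteq> P_II L" "AA \<noteq> {}" "\<And>x y. x \<in> AA \<Longrightarrow> y \<in> P_II L \<Longrightarrow> x \<subseteq> y \<Longrightarrow> y \<in> AA"
    using assms(3) unfolding P_III_def up_sets_def by auto
  have sub: "(image ptype) ` AA \<subseteq> tP_II L n" using AA(1) img_II[OF assms(1,2)] by blast
  have "\<forall>x\<in>(image ptype) ` AA. \<forall>y\<in>tP_II L n. x \<subseteq> y \<longrightarrow> y \<in> (image ptype) ` AA"
  proof clarify
    fix A tB assume a: "A \<in> AA" "tB \<in> tP_II L n" "ptype ` A \<subseteq> tB"
    define B where "B = A \<union> pre1 L tB"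
    have pB: "pre1 L tB \<in> P_II L" "ptype ` pre1 L tB = tB" using pre_II[OF assms(1,2) a(2)] by auto
    have "A \<in> P_II L" using a AA by blast
    then have "B \<in> P_II L" using pB(1) unfolding B_def P_II_def down_sets_def by blast
    then have "B \<in> AA" using AA(3)[OF a(1)] unfolding B_def by blast
    moreover have "ptype ` B = tB" using pB(2) a(3) unfolding B_def by auto
    ultimately show "tB \<in> (image ptype) ` AA" by blast
  qed
  then show ?thesis using sub AA(2) unfolding tP_III_def up_sets_def by blast
qed

definition pre2 :: "'a set \<Rightarrow> nat multiset set set \<Rightarrow> 'a set set set set" where
  "pre2 L tU = {A\<in>P_II L. ptype ` A \<in> tU}"

lemma pre_III:
  assumes "finite L" "card L = n" "tU \<in> tP_III L n"
  shows "pre2 L tU \<in> P_III L" "(image ptype) ` pre2 L tU = tU"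
proof -
  have tU: "tU \<subseteq> tP_II L n" "tU \<noteq> {}" "\<And>x y. x \<in> tU \<Longrightarrow> y \<in> tP_II L n \<Longrightarrow> x \<subseteq> y \<Longrightarrow> y \<in> tU"
    using assms(3) unfolding tP_III_def up_sets_def by auto
  show im: "(image ptype) ` pre2 L tU = tU"
  proof
    show "(image ptype) ` pre2 L tU \<subseteq> tU" unfolding pre2_def by blast
    show "tU \<subseteq> (image ptype) ` pre2 L tU"
    proof
      fix tA assume "tA \<in> tU"
      then have "tA \<in> tP_II L n" using tU by blast
      from pre_II[OF assms(1,2) this] \<open>tA \<in> tU\<close>
      show "tA \<in> (image ptype) ` pre2 L tU" unfolding pre2_def by (metis (mono_tags, lifting) image_eqI mem_Collect_eq)
    qed
  qed
  have "\<forall>x\<in>pre2 L tU. \<forall>y\<in>P_II L. x \<subseteq> y \<longrightarrow> y \<in> pre2 L tU"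
  proof clarify
    fix A B assume "A \<in> pre2 L tU" "B \<in> P_II L" "A \<subseteq> B"
    then have "ptype ` B \<in> tP_II L n" "ptype ` A \<subseteq> ptype ` B" "ptype ` A \<in> tU"
      using img_II[OF assms(1,2)] unfolding pre2_def by auto
    then show "B \<in> pre2 L tU" using tU(3) \<open>B \<in> P_II L\<close> unfolding pre2_def by blast
  qed
  moreover have "pre2 L tU \<noteq> {}" using im tU(2) by auto
  ultimately show "pre2 L tU \<in> P_III L" unfolding P_III_def up_sets_def pre2_def by blast
qed

theorem corollary1:
  fixes L :: "'a set" and n :: nat
  assumes "finite L" and "card L = n"
  shows "partial_order_on (int_partitions n) {(u, x). int_refines L u x}
    \<and> (image ptype) ` P_II L = tP_II L n
    \<and> (\<forall>tA\<in>tP_II L n. \<forall>tB\<in>tP_II L n.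
         (\<exists>A\<in>P_II L. \<exists>B\<in>P_II L. ptype ` A = tA \<and> ptype ` B = tB \<and> B \<subseteq> A)
         \<longleftrightarrow> tB \<subseteq> tA)
    \<and> (\<lambda>\<AA>. (image ptype) ` \<AA>) ` P_III L = tP_III L n
    \<and> (\<forall>tA\<in>tP_III L n. \<forall>tB\<in>tP_III L n.
         (\<exists>A\<in>P_III L. \<exists>B\<in>P_III L. (image ptype) ` A = tA \<and> (image ptype) ` B = tB \<and> B \<subseteq> A)
         \<longleftrightarrow> tB \<subseteq> tA)"
proof (intro conjI ballI)
  show "partial_order_on (int_partitions n) {(u, x). int_refines L u x}" using po[OF assms] .
  show "(image ptype) ` P_II L = tP_II L n"
    using img_II[OF assms] pre_II[OF assms] by (metis (no_types, lifting) image_iff subsetI subset_antisym)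
  show "(\<lambda>\<AA>. (image ptype) ` \<AA>) ` P_III L = tP_III L n"
    using img_III[OF assms] pre_III[OF assms] by (metis (no_types, lifting) image_iff subsetI subset_antisym)
next
  fix tA tB assume a: "tA \<in> tP_II L n" "tB \<in> tP_II L n"
  show "(\<exists>A\<in>P_II L. \<exists>B\<in>P_II L. ptype ` A = tA \<and> ptype ` B = tB \<and> B \<subseteq> A) \<longleftrightarrow> tB \<subseteq> tA"
  proof
    assume "\<exists>A\<in>P_II L. \<exists>B\<in>P_II L. ptype ` A = tA \<and> ptype ` B = tB \<and> B \<subseteq> A"
    then show "tB \<subseteq> tA" by blast
  next
    assume "tB \<subseteq> tA"
    then have "pre1 L tB \<subseteq> pre1 L tA" unfolding pre1_def by blast
    then show "\<exists>A\<in>P_II L. \<exists>B\<in>P_II L. ptype ` A = tA \<and> ptype ` B = tB \<and> B \<subseteq> A"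
      using pre_II[OF assms a(1)] pre_II[OF assms a(2)] by blast
  qed
next
  fix tA tB assume a: "tA \<in> tP_III L n" "tB \<in> tP_III L n"
  show "(\<exists>A\<in>P_III L. \<exists>B\<in>P_III L. (image ptype) ` A = tA \<and> (image ptype) ` B = tB \<and> B \<subseteq> A) \<longleftrightarrow> tB \<subseteq> tA"
  proof
    assume "\<exists>A\<in>P_III L. \<exists>B\<in>P_III L. (image ptype) ` A = tA \<and> (image ptype) ` B = tB \<and> B \<subseteq> A"
    then show "tB \<subseteq> tA" by blast
  next
    assume "tB \<subseteq> tA"
    then have "pre2 L tB \<subseteq> pre2 L tA" unfolding pre2_def by blast
    then show "\<exists>A\<in>P_III L. \<exists>B\<in>P_III L. (image ptype) ` A = tA \<and> (image ptype) ` B = tB \<and> B \<subseteq> A"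
      using pre_III[OF assms a(1)] pre_III[OF assms a(2)] by blast
  qed
qed

end
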